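(* Let $X$ be a compact Hausdorff space and let $a\in\mathrm{M}_m(\mathrm{C}(X))$ be block diagonal, $a=\mathrm{diag}(0_k,a_1,\dots,a_n)$, where $0_k$ is the $k\times k$ zero matrix and $a_i\in\mathrm{M}_{k_i}(\mathrm{C}(X))$ for natural numbers $k_1,\dots,k_n$ with $k+\sum_i k_i=m$. If $k>\max_{1\le i\le n}k_i$, then $a$ can be approximated arbitrarily closely in norm by invertible elements of $\mathrm{M}_m(\mathrm{C}(X))$. *)

theory Defs
  imports "HOL-Analysis.Analysis"
begin

text \<open>Elements of M_m(C(X)) are represented as functions
  X \<Rightarrow> (nat \<Rightarrow> nat \<Rightarrow> complex); only the entries with indices < m matter.\<close>

definition vnorm :: "nat \<Rightarrow> (nat \<Rightarrow> complex) \<Rightarrow> real" where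
  "vnorm m v = sqrt (\<Sum>i<m. (cmod (v i))^2)"

definition mat_vec :: "nat \<Rightarrow> (nat \<Rightarrow> nat \<Rightarrow> complex) \<Rightarrow> (nat \<Rightarrow> complex) \<Rightarrow> (nat \<Rightarrow> complex)" where
  "mat_vec m A v = (\<lambda>i. \<Sum>j<m. A i j * v j)"

definition opnorm :: "nat \<Rightarrow> (nat \<Rightarrow> nat \<Rightarrow> complex) \<Rightarrow> real" where
  "opnorm m A = Sup ((\<lambda>v. vnorm m (mat_vec m A v)) ` {v. vnorm m v \<le> 1})"

definition cmat :: "nat \<Rightarrow> ('a::topological_space \<Rightarrow> nat \<Rightarrow> nat \<Rightarrow> complex) \<Rightarrow> bool" where
  "cmat m a \<longleftrightarrow> (\<forall>i<m. \<forall>j<m. continuous_on UNIV (\<lambda>x. a x i j))"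

definition cmat_norm :: "nat \<Rightarrow> ('a \<Rightarrow> nat \<Rightarrow> nat \<Rightarrow> complex) \<Rightarrow> real" where
  "cmat_norm m a = (SUP x. opnorm m (a x))"

definition cmat_invertible :: "nat \<Rightarrow> ('a::topological_space \<Rightarrow> nat \<Rightarrow> nat \<Rightarrow> complex) \<Rightarrow> bool" where
  "cmat_invertible m a \<longleftrightarrow> (\<exists>b. cmat m b \<and>
     (\<forall>x. \<forall>i<m. \<forall>j<m.
        (\<Sum>l<m. a x i l * b x l j) = (if i = j then 1 else 0) \<and>
        (\<Sum>l<m. b x i l * a x l j) = (if i = j then 1 else 0)))"

text \<open>Block diagonal diag(0_k, a_1, ..., a_n); block i (i < n) has size ks i
  and starts at row/column boff k ks i.\<close>
definition boff :: "nat \<Rightarrow> (nat \<Rightarrow> nat) \<Rightarrow> nat \<Rightarrow> nat" where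
  "boff k ks i = k + (\<Sum>j<i. ks j)"

definition blockdiag :: "nat \<Rightarrow> (nat \<Rightarrow> nat) \<Rightarrow> nat \<Rightarrow> (nat \<Rightarrow> 'a \<Rightarrow> nat \<Rightarrow> nat \<Rightarrow> complex)
    \<Rightarrow> 'a \<Rightarrow> nat \<Rightarrow> nat \<Rightarrow> complex" where
  "blockdiag k ks n blocks x r c =
     (\<Sum>i<n. if boff k ks i \<le> r \<and> r < boff k ks i + ks i \<and>
               boff k ks i \<le> c \<and> c < boff k ks i + ks i
            then blocks i x (r - boff k ks i) (c - boff k ks i) else 0)"

end

theory Submission
  imports Defs
begin

definition mm :: "nat \<Rightarrow> (nat\<Rightarrow>nat\<Rightarrow>complex) \<Rightarrow> (nat\<Rightarrow>nat\<Rightarrow>complex) \<Rightarrow> nat \<Rightarrow> nat \<Rightarrow> complex" where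
  "mm m A B = (\<lambda>i j. \<Sum>l<m. A i l * B l j)"
definition idm :: "nat\<Rightarrow>nat\<Rightarrow>complex" where "idm = (\<lambda>i j. if i = j then 1 else 0)"
definition ipair :: "nat \<Rightarrow> (nat\<Rightarrow>nat\<Rightarrow>complex) \<Rightarrow> (nat\<Rightarrow>nat\<Rightarrow>complex) \<Rightarrow> bool" where
  "ipair m A B \<longleftrightarrow> (\<forall>i<m. \<forall>j<m. mm m A B i j = idm i j \<and> mm m B A i j = idm i j)"

lemma mm_assoc: "mm m (mm m A B) C i j = mm m A (mm m B C) i j"
  unfolding mm_def by (simp add: sum_distrib_left sum_distrib_right mult.assoc) (rule sum.swap)

lemma mm_cong: "(\<And>l. l<m \<Longrightarrow> A i l = A' i l) \<Longrightarrow> (\<And>l. l < m \<Longrightarrow> B l j = B' l j) \<Longrightarrow> mm m A B i j = mm m A' B' i j"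
  unfolding mm_def by (rule sum.cong) auto

lemma mm_idl: "i < m \<Longrightarrow> mm m idm A i j = A i j"
proof -
  assume "i < m"
  have "(\<Sum>l<m. (if i = l then 1 else 0) * A l j) = (\<Sum>l<m. if i = l then A l j else 0)" by (rule sum.cong) auto
  then show ?thesis using \<open>i<m\<close> by (simp add: mm_def idm_def)
qed

lemma mm_idr: "j < m \<Longrightarrow> mm m A idm i j = A i j"
proof -
  assume "j < m"
  have "(\<Sum>l<m. A i l * (if l = j then 1 else 0)) = (\<Sum>l<m. if j = l then A i l else 0)" by (rule sum.cong) auto
  then show ?thesis using \<open>j<m\<close> by (simp add: mm_def idm_def)
qed

lemma ipair_mult:
  assumes "ipair m A A'" "ipair m B B'"
  shows "ipair m (mm m A B) (mm m B' A')"
proof -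
  have 1: "mm m (mm m A B) (mm m B' A') i j = idm i j" if "i<m" "j<m" for i j
  proof -
    have "mm m (mm m A B) (mm m B' A') i j = mm m A (mm m B (mm m B' A')) i j" by (rule mm_assoc)
    also have "\<dots> = mm m A (mm m idm A') i j"
    proof (rule mm_cong)
      fix l assume "l < m"
      have "mm m B (mm m B' A') l j = mm m (mm m B B') A' l j" by (rule mm_assoc[symmetric])
      also have "\<dots> = mm m idm A' l j" by (rule mm_cong) (use assms \<open>l<m\<close> in \<open>auto simp: ipair_def\<close>)
      finally show "mm m B (mm m B' A') l j = mm m idm A' l j" .
    qed simp
    also have "\<dots> = mm m A A' i j" by (rule mm_cong) (auto simp: mm_idl)
    finally show ?thesis using assms that by (simp add: ipair_def)
  qed
  have 2: "mm m (mm m B' A') (mm m A B) i j = idm i j" if "i<m" "j<m" for i j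
  proof -
    have "mm m (mm m B' A') (mm m A B) i j = mm m B' (mm m A' (mm m A B)) i j" by (rule mm_assoc)
    also have "\<dots> = mm m B' (mm m idm B) i j"
    proof (rule mm_cong)
      fix l assume "l < m"
      have "mm m A' (mm m A B) l j = mm m (mm m A' A) B l j" by (rule mm_assoc[symmetric])
      also have "\<dots> = mm m idm B l j" by (rule mm_cong) (use assms \<open>l<m\<close> in \<open>auto simp: ipair_def\<close>)
      finally show "mm m A' (mm m A B) l j = mm m idm B l j" .
    qed simp
    also have "\<dots> = mm m B' B i j" by (rule mm_cong) (auto simp: mm_idl)
    finally show ?thesis using assms that by (simp add: ipair_def)
  qed
  show ?thesis using 1 2 by (simp add: ipair_def)
qed

lemma cmat_mm: "cmat m A \<Longrightarrow> cmat m B \<Longrightarrow> cmat m (\<lambda>x. mm m (A x) (B x))"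
  unfolding cmat_def mm_def by (auto intro!: continuous_intros)

lemma cmat_const: "cmat m (\<lambda>x. M)"
  unfolding cmat_def by auto

lemma cinv_iff: "cmat_invertible m g \<longleftrightarrow> (\<exists>h. cmat m h \<and> (\<forall>x. ipair m (g x) (h x)))"
  unfolding cmat_invertible_def ipair_def mm_def idm_def by auto

lemma cmat_bound:
  fixes A :: "'a::topological_space \<Rightarrow> nat \<Rightarrow> nat \<Rightarrow> complex"
  assumes "compact (UNIV :: 'a set)" "cmat m A"
  shows "\<exists>C>0. \<forall>x i j. i<m \<longrightarrow> j<m \<longrightarrow> cmod (A x i j) \<le> C"
proof -
  let ?s = "\<lambda>x. \<Sum>i<m. \<Sum>j<m. cmod (A x i j)"
  have "continuous_on UNIV ?s" using assms(2) unfolding cmat_def by (auto intro!: continuous_intros)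
  then have "compact (?s ` UNIV)" using assms(1) by (rule compact_continuous_image)
  then have "bounded (?s ` UNIV)" by (rule compact_imp_bounded)
  then obtain B where B: "\<And>x. norm (?s x) \<le> B" unfolding bounded_iff by auto
  have "cmod (A x i j) \<le> abs B + 1" if "i<m" "j<m" for x i j
  proof -
    have "cmod (A x i j) \<le> (\<Sum>j<m. cmod (A x i j))" by (rule member_le_sum) (use that in auto)
    also have "\<dots> \<le> ?s x" by (rule member_le_sum[where f="\<lambda>i. \<Sum>j<m. cmod (A x i j)"]) (use that in \<open>auto intro: sum_nonneg\<close>)
    also have "\<dots> \<le> B" using B[of x] by simp
    finally show ?thesis by simp
  qed
  then show ?thesis by (intro exI[of _ "abs B + 1"]) auto
qed

definition approx :: "nat \<Rightarrow> ('a::topological_space \<Rightarrow> nat \<Rightarrow> nat \<Rightarrow> complex) \<Rightarrow> bool" where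
  "approx m f \<longleftrightarrow> (\<forall>\<epsilon>>0. \<exists>g. cmat m g \<and> cmat_invertible m g \<and>
     (\<forall>x. \<forall>i<m. \<forall>j<m. cmod (f x i j - g x i j) < \<epsilon>))"

lemma approx_self: "cmat m f \<Longrightarrow> cmat_invertible m f \<Longrightarrow> approx m f"
  unfolding approx_def by (intro allI impI exI[of _ f]) auto

lemma approx_lim:
  assumes "\<And>\<epsilon>. \<epsilon> > 0 \<Longrightarrow> \<exists>y. approx m y \<and> (\<forall>x. \<forall>i<m. \<forall>j<m. cmod (f x i j - y x i j) \<le> \<epsilon>)"
  shows "approx m f"
  unfolding approx_def
proof (intro allI impI)
  fix \<epsilon> :: real assume "\<epsilon> > 0"
  then obtain y where y: "approx m y" "\<forall>x. \<forall>i<m. \<forall>j<m. cmod (f x i j - y x i j) \<le> \<epsilon>/2"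
    using assms[of "\<epsilon>/2"] by auto
  then obtain g where g: "cmat m g" "cmat_invertible m g" "\<forall>x. \<forall>i<m. \<forall>j<m. cmod (y x i j - g x i j) < \<epsilon>/2"
    using \<open>\<epsilon>>0\<close> unfolding approx_def by (meson half_gt_zero)
  have "cmod (f x i j - g x i j) < \<epsilon>" if "i<m" "j<m" for x i j
  proof -
    have "cmod (f x i j - g x i j) \<le> cmod (f x i j - y x i j) + cmod (y x i j - g x i j)"
      using norm_triangle_ineq[of "f x i j - y x i j" "y x i j - g x i j"] by simp
    moreover have "cmod (f x i j - y x i j) \<le> \<epsilon>/2" using y(2) that by blast
    moreover have "cmod (y x i j - g x i j) < \<epsilon>/2" using g(3) that by blast
    ultimately show ?thesis by linarith
  qed
  then show "\<exists>g. cmat m g \<and> cmat_invertible m g \<and> (\<forall>x. \<forall>i<m. \<forall>j<m. cmod (f x i j - g x i j) < \<epsilon>)"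
    using g by blast
qed

lemma approx_left:
  fixes f :: "'a::topological_space \<Rightarrow> nat \<Rightarrow> nat \<Rightarrow> complex"
  assumes cpt: "compact (UNIV :: 'a set)" and ap: "approx m f" and U: "cmat m U" "cmat m U'" "\<forall>x. ipair m (U x) (U' x)"
    and h: "\<forall>x. \<forall>i<m. \<forall>j<m. h x i j = mm m (U x) (f x) i j"
  shows "approx m h"
  unfolding approx_def
proof (intro allI impI)
  fix \<epsilon> :: real assume "\<epsilon> > 0"
  obtain C where C: "C > 0" "\<forall>x i j. i<m \<longrightarrow> j<m \<longrightarrow> cmod (U x i j) \<le> C" using cmat_bound[OF cpt U(1)] by auto
  define \<eta> where "\<eta> = \<epsilon> / (real m * C + 1)"
  have "real m * C \<ge> 0" using C by simp
  then have \<eta>: "\<eta> > 0" "real m * C * \<eta> < \<epsilon>" using \<open>\<epsilon>>0\<close> unfolding \<eta>_def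
  proof -
    assume h0: "real m * C \<ge> 0"
    then have d: "real m * C + 1 > 0" by simp
    show "\<epsilon> / (real m * C + 1) > 0" using d \<open>\<epsilon>>0\<close> by simp
    have "real m * C * (\<epsilon> / (real m * C + 1)) = (real m * C * \<epsilon>) / (real m * C + 1)" by simp
    also have "\<dots> < \<epsilon>" using d \<open>\<epsilon>>0\<close> by (simp add: pos_divide_less_eq algebra_simps)
    finally show "real m * C * (\<epsilon> / (real m * C + 1)) < \<epsilon>" .
  qed
  obtain g where g: "cmat m g" "cmat_invertible m g" "\<forall>x. \<forall>i<m. \<forall>j<m. cmod (f x i j - g x i j) < \<eta>"
    using ap \<eta>(1) unfolding approx_def by blast
  obtain g' where g': "cmat m g'" "\<forall>x. ipair m (g x) (g' x)" using g(2) unfolding cinv_iff by blast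
  have 1: "cmat m (\<lambda>x. mm m (U x) (g x))" by (rule cmat_mm[OF U(1) g(1)])
  have 2: "cmat_invertible m (\<lambda>x. mm m (U x) (g x))"
    unfolding cinv_iff using cmat_mm[OF g'(1) U(2)] ipair_mult U(3) g'(2) by blast
  have 3: "cmod (h x i j - mm m (U x) (g x) i j) < \<epsilon>" if "i<m" "j<m" for x i j
  proof -
    have "h x i j - mm m (U x) (g x) i j = (\<Sum>l<m. U x i l * (f x l j - g x l j))"
      using h that by (simp add: mm_def sum_subtractf right_diff_distrib)
    also have "cmod \<dots> \<le> (\<Sum>l<m. cmod (U x i l * (f x l j - g x l j)))" by (rule norm_sum)
    also have "\<dots> \<le> (\<Sum>l<m. C * \<eta>)"
    proof (rule sum_mono)
      fix l assume "l \<in> {..<m}"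
      then have "cmod (U x i l) \<le> C" "cmod (f x l j - g x l j) \<le> \<eta>" using C g(3) that by (auto intro: less_imp_le)
      then show "cmod (U x i l * (f x l j - g x l j)) \<le> C * \<eta>"
        unfolding norm_mult using C(1) by (intro mult_mono) auto
    qed
    also have "\<dots> = real m * C * \<eta>" by simp
    finally show ?thesis using \<eta> by linarith
  qed
  show "\<exists>g. cmat m g \<and> cmat_invertible m g \<and> (\<forall>x. \<forall>i<m. \<forall>j<m. cmod (h x i j - g x i j) < \<epsilon>)"
    using 1 2 3 by blast
qed

lemma approx_right:
  fixes f :: "'a::topological_space \<Rightarrow> nat \<Rightarrow> nat \<Rightarrow> complex"
  assumes cpt: "compact (UNIV :: 'a set)" and ap: "approx m f" and U: "cmat m U" "cmat m U'" "\<forall>x. ipair m (U x) (U' x)"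
    and h: "\<forall>x. \<forall>i<m. \<forall>j<m. h x i j = mm m (f x) (U x) i j"
  shows "approx m h"
  unfolding approx_def
proof (intro allI impI)
  fix \<epsilon> :: real assume "\<epsilon> > 0"
  obtain C where C: "C > 0" "\<forall>x i j. i<m \<longrightarrow> j<m \<longrightarrow> cmod (U x i j) \<le> C" using cmat_bound[OF cpt U(1)] by auto
  define \<eta> where "\<eta> = \<epsilon> / (real m * C + 1)"
  have "real m * C \<ge> 0" using C by simp
  then have \<eta>: "\<eta> > 0" "real m * C * \<eta> < \<epsilon>" using \<open>\<epsilon>>0\<close> unfolding \<eta>_def
  proof -
    assume h0: "real m * C \<ge> 0"
    then have d: "real m * C + 1 > 0" by simp
    show "\<epsilon> / (real m * C + 1) > 0" using d \<open>\<epsilon>>0\<close> by simp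
    have "real m * C * (\<epsilon> / (real m * C + 1)) = (real m * C * \<epsilon>) / (real m * C + 1)" by simp
    also have "\<dots> < \<epsilon>" using d \<open>\<epsilon>>0\<close> by (simp add: pos_divide_less_eq algebra_simps)
    finally show "real m * C * (\<epsilon> / (real m * C + 1)) < \<epsilon>" .
  qed
  obtain g where g: "cmat m g" "cmat_invertible m g" "\<forall>x. \<forall>i<m. \<forall>j<m. cmod (f x i j - g x i j) < \<eta>"
    using ap \<eta>(1) unfolding approx_def by blast
  obtain g' where g': "cmat m g'" "\<forall>x. ipair m (g x) (g' x)" using g(2) unfolding cinv_iff by blast
  have 1: "cmat m (\<lambda>x. mm m (g x) (U x))" by (rule cmat_mm[OF g(1) U(1)])
  have 2: "cmat_invertible m (\<lambda>x. mm m (g x) (U x))"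
    unfolding cinv_iff using cmat_mm[OF U(2) g'(1)] ipair_mult U(3) g'(2) by blast
  have 3: "cmod (h x i j - mm m (g x) (U x) i j) < \<epsilon>" if "i<m" "j<m" for x i j
  proof -
    have "h x i j - mm m (g x) (U x) i j = (\<Sum>l<m. (f x i l - g x i l) * U x l j)"
      using h that by (simp add: mm_def sum_subtractf left_diff_distrib)
    also have "cmod \<dots> \<le> (\<Sum>l<m. cmod ((f x i l - g x i l) * U x l j))" by (rule norm_sum)
    also have "\<dots> \<le> (\<Sum>l<m. \<eta> * C)"
    proof (rule sum_mono)
      fix l assume "l \<in> {..<m}"
      then have "cmod (U x l j) \<le> C" "cmod (f x i l - g x i l) \<le> \<eta>" using C g(3) that by (auto intro: less_imp_le)
      then show "cmod ((f x i l - g x i l) * U x l j) \<le> \<eta> * C"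
        unfolding norm_mult using \<eta>(1) by (intro mult_mono) auto
    qed
    also have "\<dots> = real m * C * \<eta>" by simp
    finally show ?thesis using \<eta> by linarith
  qed
  show "\<exists>g. cmat m g \<and> cmat_invertible m g \<and> (\<forall>x. \<forall>i<m. \<forall>j<m. cmod (h x i j - g x i j) < \<epsilon>)"
    using 1 2 3 by blast
qed

definition dg :: "(nat \<Rightarrow> complex) \<Rightarrow> nat \<Rightarrow> nat \<Rightarrow> complex" where
  "dg d = (\<lambda>i j. if i = j then d i else 0)"

lemma mm_dgl: "i < m \<Longrightarrow> mm m (dg d) A i j = d i * A i j"
proof -
  assume "i < m"
  have "(\<Sum>l<m. (if i = l then d i else 0) * A l j) = (\<Sum>l<m. if i = l then d i * A l j else 0)" by (rule sum.cong) auto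
  then show ?thesis using \<open>i<m\<close> by (simp add: mm_def dg_def)
qed

lemma ipair_dg:
  assumes "\<And>i. i < m \<Longrightarrow> d i \<noteq> 0"
  shows "ipair m (dg d) (dg (\<lambda>i. 1 / d i))"
  unfolding ipair_def
proof (intro allI impI conjI)
  fix i j assume ij: "i < m" "j < m"
  show "mm m (dg d) (dg (\<lambda>i. 1 / d i)) i j = idm i j"
    unfolding mm_dgl[OF ij(1)] using ij assms[of i] by (cases "i = j") (simp_all add: dg_def idm_def)
  show "mm m (dg (\<lambda>i. 1 / d i)) (dg d) i j = idm i j"
    unfolding mm_dgl[OF ij(1)] using ij assms[of i] by (cases "i = j") (simp_all add: dg_def idm_def)
qed

lemma ipair_unip:
  assumes "\<forall>i<m. \<forall>j<m. mm m N N i j = 0"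
  shows "ipair m (\<lambda>i j. idm i j + N i j) (\<lambda>i j. idm i j - N i j)"
proof -
  have e: "mm m (\<lambda>i j. idm i j + s1 * N i j) (\<lambda>i j. idm i j + s2 * N i j) i j
     = idm i j + s1 * N i j + s2 * N i j + s1 * s2 * mm m N N i j" if "i<m" "j<m" for i j s1 s2
  proof -
    have t: "(idm i l + s1 * N i l) * (idm l j + s2 * N l j) = idm i l * idm l j + s2 * (idm i l * N l j)
       + s1 * (N i l * idm l j) + s1 * s2 * (N i l * N l j)" for l
      by (simp add: algebra_simps)
    have "mm m (\<lambda>i j. idm i j + s1 * N i j) (\<lambda>i j. idm i j + s2 * N i j) i j =
      mm m idm idm i j + s2 * mm m idm N i j + s1 * mm m N idm i j + s1 * s2 * mm m N N i j"
      unfolding mm_def t by (simp only: sum.distrib sum_distrib_left)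
    then show ?thesis using that by (simp add: mm_idl mm_idr)
  qed
  show ?thesis unfolding ipair_def
  proof (intro allI impI conjI)
    fix i j assume ij: "i < m" "j < m"
    have z: "mm m N N i j = 0" using assms ij by blast
    show "mm m (\<lambda>i j. idm i j + N i j) (\<lambda>i j. idm i j - N i j) i j = idm i j"
      using e[OF ij, of 1 "-1"] z by simp
    show "mm m (\<lambda>i j. idm i j - N i j) (\<lambda>i j. idm i j + N i j) i j = idm i j"
      using e[OF ij, of "-1" 1] z by simp
  qed
qed

definition pmat :: "(nat \<Rightarrow> nat) \<Rightarrow> nat \<Rightarrow> nat \<Rightarrow> complex" where
  "pmat \<sigma> = (\<lambda>i j. if j = \<sigma> i then 1 else 0)"

lemma mm_pmatr:
  assumes "\<forall>i<m. \<sigma> i < m \<and> \<sigma> (\<sigma> i) = i" "j < m"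
  shows "mm m A (pmat \<sigma>) i j = A i (\<sigma> j)"
proof -
  have "(\<Sum>l<m. A i l * (if j = \<sigma> l then 1 else 0)) = (\<Sum>l<m. if l = \<sigma> j then A i l else 0)"
  proof (rule sum.cong)
    fix l assume "l \<in> {..<m}"
    then have "\<sigma> (\<sigma> l) = l" "\<sigma> (\<sigma> j) = j" using assms by auto
    then have "(j = \<sigma> l) = (l = \<sigma> j)" by metis
    then show "A i l * (if j = \<sigma> l then 1 else 0) = (if l = \<sigma> j then A i l else 0)" by simp
  qed simp
  moreover have "\<sigma> j < m" using assms by blast
  ultimately show ?thesis by (simp add: mm_def pmat_def)
qed

lemma ipair_pmat:
  assumes "\<forall>i<m. \<sigma> i < m \<and> \<sigma> (\<sigma> i) = i"
  shows "ipair m (pmat \<sigma>) (pmat \<sigma>)"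
  unfolding ipair_def
proof (intro allI impI conjI)
  fix i j assume ij: "i < m" "j < m"
  have "\<sigma> (\<sigma> i) = i" "\<sigma> (\<sigma> j) = j" using assms ij by auto
  then have "(\<sigma> j = \<sigma> i) = (i = j)" by metis
  then show "mm m (pmat \<sigma>) (pmat \<sigma>) i j = idm i j" "mm m (pmat \<sigma>) (pmat \<sigma>) i j = idm i j"
    using mm_pmatr[OF assms ij(2)] by (simp_all add: pmat_def idm_def)
qed


lemma core:
  fixes a Bm xz xo N z2 :: "nat \<Rightarrow> nat \<Rightarrow> complex" and \<sigma> :: "nat \<Rightarrow> nat" and d :: "nat \<Rightarrow> complex"
  assumes qk: "q \<le> k" and pm: "p + k + q \<le> m" and e0: "e \<noteq> 0"
    and X0: "\<And>r c. xz r c = (if r < p \<and> r = c then 1 else 0) +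
       ((if p+k \<le> r \<and> r < p+k+q \<and> p+k \<le> c \<and> c < p+k+q then a (r-(p+k)) (c-(p+k)) else 0) + Bm r c)"
    and X1: "\<And>r c. xo r c = (if r < p+q \<and> r = c then 1 else 0) + Bm r c"
    and Bz: "\<And>r c. r < p+k+q \<or> c < p+k+q \<Longrightarrow> Bm r c = 0"
    and S: "\<And>c. \<sigma> c = (if p \<le> c \<and> c < p+q then c+k else if p+k \<le> c \<and> c < p+k+q then c-k else c)"
    and D: "\<And>r. d r = (if p \<le> r \<and> r < p+q then e else 1)"
    and N: "\<And>r l. N r l = (if p+k \<le> r \<and> r < p+k+q \<and> p \<le> l \<and> l < p+q then a (r-(p+k)) (l-p) / e else 0)"
    and Z: "\<And>r c. z2 r c = d r * xo r (\<sigma> c)"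
    and rc: "r < m" "c < m"
  shows "xz r c + (if p \<le> r \<and> r < p+q \<and> c = r+k then e else 0) = mm m (\<lambda>i j. idm i j + N i j) z2 r c"
proof -
  have sm: "\<sigma> c < m" using S[of c] rc pm by auto
  have "mm m (\<lambda>i j. idm i j + N i j) z2 r c = mm m idm z2 r c + (\<Sum>l<m. N r l * z2 l c)"
    unfolding mm_def by (simp add: distrib_right sum.distrib)
  also have "mm m idm z2 r c = z2 r c" using rc by (simp add: mm_idl)
  also have "(\<Sum>l<m. N r l * z2 l c) = (\<Sum>l<m. if l = \<sigma> c then
     (if p+k \<le> r \<and> r < p+k+q \<and> p \<le> l \<and> l < p+q then a (r-(p+k)) (l-p) else 0) else 0)"
  proof (rule sum.cong)
    fix l assume "l \<in> {..<m}"
    show "N r l * z2 l c = (if l = \<sigma> c then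
     (if p+k \<le> r \<and> r < p+k+q \<and> p \<le> l \<and> l < p+q then a (r-(p+k)) (l-p) else 0) else 0)"
    proof (cases "p+k \<le> r \<and> r < p+k+q \<and> p \<le> l \<and> l < p+q")
      case True
      then have "Bm l (\<sigma> c) = 0" by (intro Bz) auto
      then show ?thesis using True e0 by (auto simp: N Z D X1)
    next
      case False
      then show ?thesis by (auto simp: N)
    qed
  qed simp
  also have "\<dots> = (if p+k \<le> r \<and> r < p+k+q \<and> p \<le> \<sigma> c \<and> \<sigma> c < p+q then a (r-(p+k)) (\<sigma> c-p) else 0)"
    using sm by simp
  also have "\<dots> = (if p+k \<le> r \<and> r < p+k+q \<and> p+k \<le> c \<and> c < p+k+q then a (r-(p+k)) (c-(p+k)) else 0)"
    using S[of c] qk by (auto simp: add.commute)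
  finally have M: "mm m (\<lambda>i j. idm i j + N i j) z2 r c = z2 r c + (if p+k \<le> r \<and> r < p+k+q \<and> p+k \<le> c \<and> c < p+k+q then a (r-(p+k)) (c-(p+k)) else 0)" .
  show ?thesis
  proof (cases "p+k \<le> r \<and> r < p+k+q")
    case True
    have "Bm r c = 0" "Bm r (\<sigma> c) = 0" using True by (auto intro: Bz)
    then show ?thesis unfolding M using True qk by (simp add: Z D X1 X0)
  next
    case F1: False
    show ?thesis
    proof (cases "p \<le> r \<and> r < p+q")
      case True
      have "Bm r c = 0" "Bm r (\<sigma> c) = 0" using True by (auto intro: Bz)
      moreover have "(r = \<sigma> c) = (c = r + k)" using True S[of c] qk by auto
      ultimately show ?thesis unfolding M using True qk by (simp add: Z D X1 X0)
    next
      case F2: False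
      have "xo r (\<sigma> c) = xz r c"
      proof (cases "p \<le> c \<and> c < p+q")
        case True
        then have "Bm r (\<sigma> c) = 0" "Bm r c = 0" using S[of c] by (auto intro: Bz)
        then show ?thesis using True F1 F2 S[of c] qk by (simp add: X1 X0)
      next
        case F3: False
        show ?thesis
        proof (cases "p+k \<le> c \<and> c < p+k+q")
          case True
          then have "Bm r (\<sigma> c) = 0" "Bm r c = 0" using S[of c] qk by (auto intro: Bz)
          then show ?thesis using True F1 F2 F3 S[of c] qk by (auto simp add: X1 X0)
        next
          case False
          then have "\<sigma> c = c" using F3 S[of c] by auto
          then show ?thesis using False F1 F2 F3 by (auto simp add: X1 X0)
        qed
      qed
      moreover have "(if p \<le> r \<and> r < p+q \<and> c = r+k then e else 0) = 0" using F2 by auto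
      moreover have "(if p+k \<le> r \<and> r < p+k+q \<and> p+k \<le> c \<and> c < p+k+q then a (r-(p+k)) (c-(p+k)) else 0) = 0"
        using F1 by auto
      moreover have "d r = 1" using F2 D by auto
      ultimately show ?thesis unfolding M Z by simp
    qed
  qed
qed


lemma sum_sq_le: "(\<forall>i<m. (t::nat\<Rightarrow>real) i \<ge> 0) \<Longrightarrow> (\<Sum>i<m. (t i)^2) \<le> (\<Sum>i<m. t i)^2"
proof (induction m)
  case 0 then show ?case by simp
next
  case (Suc m)
  have "0 \<le> (\<Sum>i<m. t i)" using Suc.prems by (auto intro: sum_nonneg)
  moreover have "t m \<ge> 0" using Suc.prems by auto
  ultimately have "0 \<le> 2 * (\<Sum>i<m. t i) * t m" by simp
  have IH: "(\<Sum>i<m. (t i)^2) \<le> (\<Sum>i<m. t i)^2" using Suc by auto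
  have e1: "(\<Sum>i<Suc m. (t i)^2) = (\<Sum>i<m. (t i)^2) + (t m)^2" by simp
  have e2: "(\<Sum>i<Suc m. t i)^2 = (\<Sum>i<m. t i)^2 + 2 * (\<Sum>i<m. t i) * t m + (t m)^2"
    by (simp add: power2_sum)
  show ?case unfolding e1 e2 using IH \<open>0 \<le> 2 * (\<Sum>i<m. t i) * t m\<close> by linarith
qed

lemma vnorm_le_l1: "vnorm m w \<le> (\<Sum>i<m. cmod (w i))"
proof -
  have "vnorm m w \<le> sqrt ((\<Sum>i<m. cmod (w i))^2)"
    unfolding vnorm_def by (rule real_sqrt_le_mono, rule sum_sq_le) auto
  also have "\<dots> = (\<Sum>i<m. cmod (w i))" by (simp add: sum_nonneg)
  finally show ?thesis .
qed

lemma comp_le_vnorm: "j < m \<Longrightarrow> cmod (v j) \<le> vnorm m v"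
proof -
  assume "j < m"
  have "cmod (v j) = sqrt ((cmod (v j))^2)" by simp
  also have "\<dots> \<le> vnorm m v" unfolding vnorm_def
    by (rule real_sqrt_le_mono, rule member_le_sum[where f="\<lambda>i. (cmod (v i))^2"]) (use \<open>j<m\<close> in auto)
  finally show ?thesis .
qed

lemma opnorm_le: "opnorm m A \<le> (\<Sum>i<m. \<Sum>j<m. cmod (A i j))"
  unfolding opnorm_def
proof (rule cSup_least)
  have "(\<lambda>_. 0) \<in> {v. vnorm m v \<le> 1}" by (simp add: vnorm_def)
  then show "(\<lambda>v. vnorm m (mat_vec m A v)) ` {v. vnorm m v \<le> 1} \<noteq> {}" by blast
next
  fix y assume "y \<in> (\<lambda>v. vnorm m (mat_vec m A v)) ` {v. vnorm m v \<le> 1}"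
  then obtain v where v: "vnorm m v \<le> 1" "y = vnorm m (mat_vec m A v)" by auto
  have "y \<le> (\<Sum>i<m. cmod (mat_vec m A v i))" using v(2) vnorm_le_l1 by simp
  also have "\<dots> \<le> (\<Sum>i<m. \<Sum>j<m. cmod (A i j))"
  proof (rule sum_mono)
    fix i assume "i \<in> {..<m}"
    have "cmod (mat_vec m A v i) \<le> (\<Sum>j<m. cmod (A i j * v j))" unfolding mat_vec_def by (rule norm_sum)
    also have "\<dots> \<le> (\<Sum>j<m. cmod (A i j))"
    proof (rule sum_mono)
      fix j assume "j \<in> {..<m}"
      then have "cmod (v j) \<le> 1" using comp_le_vnorm[of j m v] v(1) by simp
      then show "cmod (A i j * v j) \<le> cmod (A i j)" unfolding norm_mult
        using mult_left_mono[of "cmod (v j)" 1 "cmod (A i j)"] by simp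
    qed
    finally show "cmod (mat_vec m A v i) \<le> (\<Sum>j<m. cmod (A i j))" .
  qed
  finally show "y \<le> (\<Sum>i<m. \<Sum>j<m. cmod (A i j))" .
qed

lemma approx_final:
  assumes "approx m a"
  shows "\<forall>\<epsilon>>0. \<exists>b. cmat m b \<and> cmat_invertible m b \<and> cmat_norm m (\<lambda>x i j. a x i j - b x i j) < \<epsilon>"
proof (intro allI impI)
  fix \<epsilon> :: real assume "\<epsilon> > 0"
  define \<eta> where "\<eta> = \<epsilon> / (real m * real m + 1)"
  have "real m * real m \<ge> 0" by simp
  then have d: "real m * real m + 1 > 0" by linarith
  have \<eta>0: "\<eta> > 0" unfolding \<eta>_def using d \<open>\<epsilon>>0\<close> by simp
  have "real m * real m * \<eta> = (real m * real m * \<epsilon>) / (real m * real m + 1)" unfolding \<eta>_def by simp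
  also have "\<dots> < \<epsilon>" using d \<open>\<epsilon>>0\<close> by (simp add: pos_divide_less_eq algebra_simps)
  finally have \<eta>1: "real m * real m * \<eta> < \<epsilon>" .
  obtain g where g: "cmat m g" "cmat_invertible m g" "\<forall>x. \<forall>i<m. \<forall>j<m. cmod (a x i j - g x i j) < \<eta>"
    using assms \<eta>0 unfolding approx_def by blast
  have "cmat_norm m (\<lambda>x i j. a x i j - g x i j) \<le> real m * real m * \<eta>"
    unfolding cmat_norm_def
  proof (rule cSUP_least)
    fix x
    have "opnorm m (a x - g x) \<le> (\<Sum>i<m. \<Sum>j<m. cmod (a x i j - g x i j))"
      using opnorm_le[of m "\<lambda>i j. a x i j - g x i j"] by (simp add: fun_diff_def)
    also have "\<dots> \<le> (\<Sum>i<m. \<Sum>j<m. \<eta>)"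
      by (intro sum_mono) (use g(3) in \<open>auto intro: less_imp_le\<close>)
    also have "\<dots> = real m * real m * \<eta>" by simp
    finally show "opnorm m ((\<lambda>x i j. a x i j - g x i j) x) \<le> real m * real m * \<eta>"
      by (simp add: fun_diff_def)
  qed simp
  then show "\<exists>b. cmat m b \<and> cmat_invertible m b \<and> cmat_norm m (\<lambda>x i j. a x i j - b x i j) < \<epsilon>"
    using g \<eta>1 by force
qed


lemma bd_zero: "r < off \<or> c < off \<Longrightarrow> blockdiag off ks n blocks x r c = 0"
  unfolding blockdiag_def boff_def by (auto intro!: sum.neutral)

lemma bd_Suc: "blockdiag off ks (Suc n) blocks x r c =
   (if off \<le> r \<and> r < off + ks 0 \<and> off \<le> c \<and> c < off + ks 0 then blocks 0 x (r - off) (c - off) else 0)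
   + blockdiag (off + ks 0) (\<lambda>i. ks (Suc i)) n (\<lambda>i. blocks (Suc i)) x r c"
  unfolding blockdiag_def boff_def by (simp only: sum.lessThan_Suc_shift add.assoc) simp

definition Fm :: "nat \<Rightarrow> nat \<Rightarrow> (nat \<Rightarrow> nat) \<Rightarrow> nat \<Rightarrow> (nat \<Rightarrow> 'a \<Rightarrow> nat \<Rightarrow> nat \<Rightarrow> complex) \<Rightarrow> 'a \<Rightarrow> nat \<Rightarrow> nat \<Rightarrow> complex" where
  "Fm p k ks n blocks = (\<lambda>x r c. (if r < p \<and> r = c then 1 else 0) + blockdiag (p + k) ks n blocks x r c)"

lemma main:
  fixes blocks :: "nat \<Rightarrow> 'a::topological_space \<Rightarrow> nat \<Rightarrow> nat \<Rightarrow> complex"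
  assumes cpt: "compact (UNIV :: 'a set)"
  shows "(\<forall>i<n. cmat (ks i) (blocks i)) \<Longrightarrow> (\<forall>i<n. ks i \<le> k) \<Longrightarrow> m = p + k + (\<Sum>i<n. ks i)
    \<Longrightarrow> approx m (Fm p k ks n blocks)"
proof (induction n arbitrary: p ks blocks)
  case 0
  show ?case
  proof (rule approx_lim)
    fix \<epsilon> :: real assume "\<epsilon> > 0"
    define y where "y = (\<lambda>x::'a. dg (\<lambda>i. if i < p then 1 else complex_of_real \<epsilon>))"
    have nz: "(if i < p then 1 else complex_of_real \<epsilon>) \<noteq> 0" for i using \<open>\<epsilon>>0\<close> by auto
    have "approx m y"
    proof (rule approx_self)
      show "cmat m y" unfolding y_def by (rule cmat_const)
      show "cmat_invertible m y" unfolding cinv_iff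
      proof (intro exI conjI allI)
        show "cmat m (\<lambda>x::'a. dg (\<lambda>i. 1 / (if i < p then 1 else complex_of_real \<epsilon>)))" by (rule cmat_const)
        fix x
        show "ipair m (y x) (dg (\<lambda>i. 1 / (if i < p then 1 else complex_of_real \<epsilon>)))"
          unfolding y_def by (rule ipair_dg[OF nz])
      qed
    qed
    moreover have "cmod (Fm p k ks 0 blocks x i j - y x i j) \<le> \<epsilon>" for x i j
    proof -
      have f: "Fm p k ks 0 blocks x i j = (if i < p \<and> i = j then 1 else 0)" by (simp add: Fm_def blockdiag_def)
      show ?thesis
      proof (cases "i = j")
        case True
        then show ?thesis unfolding f using \<open>\<epsilon>>0\<close> by (cases "i < p") (simp_all add: y_def dg_def)
      next
        case False
        then show ?thesis unfolding f using \<open>\<epsilon>>0\<close> by (simp add: y_def dg_def)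
      qed
    qed
    ultimately show "\<exists>y. approx m y \<and> (\<forall>x. \<forall>i<m. \<forall>j<m. cmod (Fm p k ks 0 blocks x i j - y x i j) \<le> \<epsilon>)"
      by blast
  qed
next
  case (Suc n)
  define q where "q = ks 0"
  define ks' where "ks' = (\<lambda>i. ks (Suc i))"
  define blocks' where "blocks' = (\<lambda>i. blocks (Suc i))"
  have qk: "q \<le> k" using Suc.prems(2) unfolding q_def by auto
  have mq: "m = (p + q) + k + (\<Sum>i<n. ks' i)"
    using Suc.prems(3) sum.lessThan_Suc_shift[of ks n] unfolding q_def ks'_def by simp
  have pm: "p + k + q \<le> m" using mq by simp
  have IH: "approx m (Fm (p + q) k ks' n blocks')"
  proof (rule Suc.IH)
    show "\<forall>i<n. cmat (ks' i) (blocks' i)" using Suc.prems(1) unfolding ks'_def blocks'_def by auto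
    show "\<forall>i<n. ks' i \<le> k" using Suc.prems(2) unfolding ks'_def by auto
    show "m = p + q + k + (\<Sum>i<n. ks' i)" by (rule mq)
  qed
  have ca: "cmat q (blocks 0)" using Suc.prems(1) unfolding q_def by auto
  define \<sigma> where "\<sigma> = (\<lambda>c. if p \<le> c \<and> c < p+q then c+k else if p+k \<le> c \<and> c < p+k+q then c-k else c)"
  have \<sigma>ok: "\<forall>i<m. \<sigma> i < m \<and> \<sigma> (\<sigma> i) = i" using qk pm unfolding \<sigma>_def by auto
  define z1 where "z1 = (\<lambda>x r c. Fm (p + q) k ks' n blocks' x r (\<sigma> c))"
  have A1: "approx m z1"
    by (rule approx_right[OF cpt IH cmat_const cmat_const, of "pmat \<sigma>" "pmat \<sigma>"])
      (use ipair_pmat[OF \<sigma>ok] mm_pmatr[OF \<sigma>ok] in \<open>auto simp: z1_def\<close>)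
  show ?case
  proof (rule approx_lim)
    fix \<epsilon> :: real assume "\<epsilon> > 0"
    define e where "e = complex_of_real \<epsilon>"
    have e0: "e \<noteq> 0" using \<open>\<epsilon>>0\<close> unfolding e_def by auto
    define d where "d = (\<lambda>r. if p \<le> r \<and> r < p+q then e else 1)"
    have dnz: "d i \<noteq> 0" for i using e0 unfolding d_def by auto
    define z2 where "z2 = (\<lambda>x r c. d r * z1 x r c)"
    have A2: "approx m z2"
      by (rule approx_left[OF cpt A1 cmat_const cmat_const, of "dg d" "dg (\<lambda>i. 1 / d i)"])
        (use ipair_dg[OF dnz] mm_dgl in \<open>auto simp: z2_def\<close>)
    define N where "N = (\<lambda>x r l. if p+k \<le> r \<and> r < p+k+q \<and> p \<le> l \<and> l < p+q then blocks 0 x (r-(p+k)) (l-p) / e else 0)"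
    define y where "y = (\<lambda>x r c. Fm p k ks (Suc n) blocks x r c + (if p \<le> r \<and> r < p+q \<and> c = r+k then e else 0))"
    have cN: "continuous_on UNIV (\<lambda>x. N x i j)" for i j
    proof (cases "p+k \<le> i \<and> i < p+k+q \<and> p \<le> j \<and> j < p+q")
      case True
      then have "continuous_on UNIV (\<lambda>x. blocks 0 x (i-(p+k)) (j-p))" using ca unfolding cmat_def by auto
      then show ?thesis using True e0 unfolding N_def by (auto intro!: continuous_intros)
    qed (auto simp: N_def)
    have NN: "\<forall>i<m. \<forall>j<m. mm m (N x) (N x) i j = 0" for x
      unfolding mm_def using qk by (auto simp: N_def intro!: sum.neutral)
    have A3: "approx m y"
    proof (rule approx_left[OF cpt A2, of "\<lambda>x i j. idm i j + N x i j" "\<lambda>x i j. idm i j - N x i j"])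
      show "cmat m (\<lambda>x i j. idm i j + N x i j)" unfolding cmat_def using cN by (auto intro!: continuous_intros)
      show "cmat m (\<lambda>x i j. idm i j - N x i j)" unfolding cmat_def using cN by (auto intro!: continuous_intros)
      show "\<forall>x. ipair m (\<lambda>i j. idm i j + N x i j) (\<lambda>i j. idm i j - N x i j)"
        using ipair_unip[OF NN] by blast
      show "\<forall>x. \<forall>i<m. \<forall>j<m. y x i j = mm m (\<lambda>i j. idm i j + N x i j) (z2 x) i j"
      proof (intro allI impI)
        fix x i j assume ij: "i < m" "j < m"
        show "y x i j = mm m (\<lambda>i j. idm i j + N x i j) (z2 x) i j"
          unfolding y_def
        proof (rule core[where a="blocks 0 x"
              and Bm="blockdiag (p+k+q) ks' n blocks' x" and xo="Fm (p+q) k ks' n blocks' x", OF qk pm e0 _ _ _ _ _ _ _ ij])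
          show "\<And>r c. Fm p k ks (Suc n) blocks x r c = (if r < p \<and> r = c then 1 else 0) +
            ((if p+k \<le> r \<and> r < p+k+q \<and> p+k \<le> c \<and> c < p+k+q then blocks 0 x (r-(p+k)) (c-(p+k)) else 0)
             + blockdiag (p+k+q) ks' n blocks' x r c)"
            unfolding Fm_def bd_Suc q_def ks'_def blocks'_def by simp
          show "\<And>r c. Fm (p+q) k ks' n blocks' x r c = (if r < p+q \<and> r = c then 1 else 0) + blockdiag (p+k+q) ks' n blocks' x r c"
            unfolding Fm_def by (simp add: add_ac)
          show "\<And>r c. r < p+k+q \<or> c < p+k+q \<Longrightarrow> blockdiag (p+k+q) ks' n blocks' x r c = 0"
            by (rule bd_zero)
          show "\<And>c. \<sigma> c = (if p \<le> c \<and> c < p+q then c+k else if p+k \<le> c \<and> c < p+k+q then c-k else c)"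
            unfolding \<sigma>_def ..
          show "\<And>r. d r = (if p \<le> r \<and> r < p+q then e else 1)" unfolding d_def ..
          show "\<And>r l. N x r l = (if p+k \<le> r \<and> r < p+k+q \<and> p \<le> l \<and> l < p+q then blocks 0 x (r-(p+k)) (l-p) / e else 0)"
            unfolding N_def ..
          show "\<And>r c. z2 x r c = d r * Fm (p+q) k ks' n blocks' x r (\<sigma> c)" unfolding z2_def z1_def ..
        qed
      qed
    qed
    moreover have "cmod (Fm p k ks (Suc n) blocks x i j - y x i j) \<le> \<epsilon>" for x i j
      using \<open>\<epsilon>>0\<close> by (auto simp: y_def e_def)
    ultimately show "\<exists>y. approx m y \<and> (\<forall>x. \<forall>i<m. \<forall>j<m. cmod (Fm p k ks (Suc n) blocks x i j - y x i j) \<le> \<epsilon>)"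
      by blast
  qed
qed

theorem lemma4p2:
  fixes a :: "'a::t2_space \<Rightarrow> nat \<Rightarrow> nat \<Rightarrow> complex"
    and blocks :: "nat \<Rightarrow> 'a \<Rightarrow> nat \<Rightarrow> nat \<Rightarrow> complex"
    and ks :: "nat \<Rightarrow> nat"
    and k n m :: nat
  assumes "compact (UNIV :: 'a set)"
    and "\<forall>i<n. cmat (ks i) (blocks i)"
    and "k + (\<Sum>i<n. ks i) = m"
    and "a = blockdiag k ks n blocks"
    and "\<forall>i<n. ks i < k"
  shows "\<forall>\<epsilon>>0. \<exists>b. cmat m b \<and> cmat_invertible m b \<and>
           cmat_norm m (\<lambda>x i j. a x i j - b x i j) < \<epsilon>"
proof (rule approx_final)
  have "approx m (Fm 0 k ks n blocks)"
  proof (rule main[OF assms(1)])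
    show "\<forall>i<n. cmat (ks i) (blocks i)" by (rule assms(2))
    show "\<forall>i<n. ks i \<le> k" using assms(5) by (simp add: less_imp_le)
    show "m = 0 + k + (\<Sum>i<n. ks i)" using assms(3) by simp
  qed
  moreover have "Fm 0 k ks n blocks = a" unfolding assms(4) Fm_def by simp
  ultimately show "approx m a" by simp
qed

end
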